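(* Let $\mathcal{X}=\{x_1,\dots,x_M\}$ and $\mathcal{Y}=\{y_1,\dots,y_N\}$ be finite sets (in this fixed enumeration), let $p(x)$ be a probability distribution on $\mathcal{X}$, and let $c:\mathcal{X}\times\mathcal{Y}\to[0,\infty]$ be a cost function that is staircase nondecreasing, i.e. (i) for all $1\le i<j\le M$ and all $y\in\mathcal{Y}$, if $c(x_i,y)=\infty$ then $c(x_j,y)=\infty$; and (ii) for all $1\le i<j\le N$ and all $x\in\mathcal{X}$, if $c(x,y_i)<\infty$ then $c(x,y_i)\le c(x,y_j)<\infty$. Assume that at least one protection scheme (defined below) exists. Then: 1. For every $\alpha>0$, $$\min_{(\mathscr{L},\mathscr{C})\in S}\ \mathscr{C}+\alpha\mathscr{L} \;=\; \min_{(\mathscr{L},\mathscr{C})\in S_d}\ \mathscr{C}+\alpha\mathscr{L}.$$ 2. For every $L\ge 1$, the pair $(L,C^*(L))$ is achieved by $\mathbf{P}=\lambda\mathbf{P}_1+(1-\lambda)\mathbf{P}_2$ for some $\lambda\in[0,1]$ and some deterministic protection schemes $\mathbf{P}_1,\mathbf{P}_2$, such that $\mathscr{L}(\mathbf{P})\le L$ and $C^*(L)\le \lambda\, C^*_d(\mathscr{L}(\mathbf{P}_1))+(1-\lambda)\,C^*_d(\mathscr{L}(\mathbf{P}_2))$.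
   Context: For any $M\times N$ matrix $\mathbf{A}=\{a_{xy}\}$ (rows indexed by $\mathcal{X}$, columns by $\mathcal{Y}$), the total cost is $\mathscr{C}(\mathbf{A})=\sum_{x,y}p(x)c(x,y)a_{xy}$ (with the convention $0\cdot\infty=0$), and the exponentiated maximal leakage (exp-leak) is $\mathscr{L}(\mathbf{A})=\sum_{y}\max_{x}a_{xy}$. A protection scheme is an $M\times N$ matrix $\mathbf{P}=\{p_{xy}\}$ with nonnegative entries, each row summing to $1$ (interpreted as $p_{xy}=\Pr(Y=y\mid X=x)$), and with $\mathscr{C}(\mathbf{P})<\infty$. It is deterministic if every entry is $0$ or $1$. A pair $(L,C)$ is achieved by $\mathbf{P}$ if $\mathscr{L}(\mathbf{P})\le L$ and $\mathscr{C}(\mathbf{P})\le C$. $S$ is the set of all pairs $(L,C)$ achieved by some protection scheme, and $S_d$ the set of all pairs achieved by some deterministic protection scheme. $C^*(L)=\inf\{C:(L,C)\in S\}$ and $C^*_d(L)=\inf\{C:(L,C)\in S_d\}$. *)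

theory Defs
  imports "HOL-Analysis.Analysis"
begin

text \<open>Indices: rows x_1..x_M are 0..M-1, columns y_1..y_N are 0..N-1 (same order).
Matrices are functions nat => nat => real; only entries with x < M, y < N matter.
Costs take values in [0,infinity] = ennreal, where 0 * top = 0.\<close>

definition total_cost :: "nat \<Rightarrow> nat \<Rightarrow> (nat \<Rightarrow> real) \<Rightarrow> (nat \<Rightarrow> nat \<Rightarrow> ennreal)
    \<Rightarrow> (nat \<Rightarrow> nat \<Rightarrow> real) \<Rightarrow> ennreal" where
  "total_cost M N p c A = (\<Sum>x<M. \<Sum>y<N. ennreal (p x) * c x y * ennreal (A x y))"

definition exp_leak :: "nat \<Rightarrow> nat \<Rightarrow> (nat \<Rightarrow> nat \<Rightarrow> real) \<Rightarrow> real" where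
  "exp_leak M N A = (\<Sum>y<N. Max ((\<lambda>x. A x y) ` {..<M}))"

definition prot_scheme :: "nat \<Rightarrow> nat \<Rightarrow> (nat \<Rightarrow> real) \<Rightarrow> (nat \<Rightarrow> nat \<Rightarrow> ennreal)
    \<Rightarrow> (nat \<Rightarrow> nat \<Rightarrow> real) \<Rightarrow> bool" where
  "prot_scheme M N p c P \<longleftrightarrow>
     (\<forall>x<M. \<forall>y<N. 0 \<le> P x y) \<and> (\<forall>x<M. (\<Sum>y<N. P x y) = 1) \<and>
     total_cost M N p c P < \<infinity>"

definition det_scheme :: "nat \<Rightarrow> nat \<Rightarrow> (nat \<Rightarrow> real) \<Rightarrow> (nat \<Rightarrow> nat \<Rightarrow> ennreal)
    \<Rightarrow> (nat \<Rightarrow> nat \<Rightarrow> real) \<Rightarrow> bool" where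
  "det_scheme M N p c P \<longleftrightarrow> prot_scheme M N p c P \<and> (\<forall>x<M. \<forall>y<N. P x y = 0 \<or> P x y = 1)"

definition cost :: "nat \<Rightarrow> nat \<Rightarrow> (nat \<Rightarrow> real) \<Rightarrow> (nat \<Rightarrow> nat \<Rightarrow> ennreal)
    \<Rightarrow> (nat \<Rightarrow> nat \<Rightarrow> real) \<Rightarrow> real" where
  "cost M N p c A = enn2real (total_cost M N p c A)"

definition achieves :: "nat \<Rightarrow> nat \<Rightarrow> (nat \<Rightarrow> real) \<Rightarrow> (nat \<Rightarrow> nat \<Rightarrow> ennreal)
    \<Rightarrow> (nat \<Rightarrow> nat \<Rightarrow> real) \<Rightarrow> real \<Rightarrow> real \<Rightarrow> bool" where
  "achieves M N p c P L C \<longleftrightarrow> exp_leak M N P \<le> L \<and> total_cost M N p c P \<le> ennreal C \<and> 0 \<le> C"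

definition S_set :: "nat \<Rightarrow> nat \<Rightarrow> (nat \<Rightarrow> real) \<Rightarrow> (nat \<Rightarrow> nat \<Rightarrow> ennreal) \<Rightarrow> (real \<times> real) set" where
  "S_set M N p c = {(L, C). \<exists>P. prot_scheme M N p c P \<and> achieves M N p c P L C}"

definition Sd_set :: "nat \<Rightarrow> nat \<Rightarrow> (nat \<Rightarrow> real) \<Rightarrow> (nat \<Rightarrow> nat \<Rightarrow> ennreal) \<Rightarrow> (real \<times> real) set" where
  "Sd_set M N p c = {(L, C). \<exists>P. det_scheme M N p c P \<and> achieves M N p c P L C}"

definition Cstar :: "nat \<Rightarrow> nat \<Rightarrow> (nat \<Rightarrow> real) \<Rightarrow> (nat \<Rightarrow> nat \<Rightarrow> ennreal) \<Rightarrow> real \<Rightarrow> real" where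
  "Cstar M N p c L = Inf {C. (L, C) \<in> S_set M N p c}"

definition Cstar_d :: "nat \<Rightarrow> nat \<Rightarrow> (nat \<Rightarrow> real) \<Rightarrow> (nat \<Rightarrow> nat \<Rightarrow> ennreal) \<Rightarrow> real \<Rightarrow> real" where
  "Cstar_d M N p c L = Inf {C. (L, C) \<in> Sd_set M N p c}"

definition staircase_nondecr :: "nat \<Rightarrow> nat \<Rightarrow> (nat \<Rightarrow> nat \<Rightarrow> ennreal) \<Rightarrow> bool" where
  "staircase_nondecr M N c \<longleftrightarrow>
     (\<forall>i j y. i < j \<and> j < M \<and> y < N \<and> c i y = \<infinity> \<longrightarrow> c j y = \<infinity>) \<and>
     (\<forall>i j x. i < j \<and> j < N \<and> x < M \<and> c x i < \<infinity> \<longrightarrow> c x i \<le> c x j \<and> c x j < \<infinity>)"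

end

theory Submission
  imports Defs
begin



locale setting =
  fixes M N :: nat and p :: "nat \<Rightarrow> real" and c :: "nat \<Rightarrow> nat \<Rightarrow> ennreal"
  assumes p_nonneg: "\<forall>x<M. 0 \<le> p x" and p_sum: "(\<Sum>x<M. p x) = 1"
    and stair: "staircase_nondecr M N c" and ex: "\<exists>P. prot_scheme M N p c P"
begin

definition r :: "nat \<Rightarrow> nat \<Rightarrow> real" where "r x y = enn2real (c x y)"
definition okP :: "(nat \<Rightarrow> nat \<Rightarrow> real) \<Rightarrow> bool" where
  "okP P \<longleftrightarrow> (\<forall>x<M. \<forall>y<N. p x = 0 \<or> P x y = 0 \<or> c x y < \<infinity>)"
definition rc :: "(nat \<Rightarrow> nat \<Rightarrow> real) \<Rightarrow> real" where
  "rc P = (\<Sum>x<M. \<Sum>y<N. p x * r x y * P x y)"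

lemma M_pos: "0 < M"
  using p_sum by (cases M) auto

lemma N_pos: "0 < N"
proof -
  obtain P where "prot_scheme M N p c P" using ex by auto
  then have "(\<Sum>y<N. P 0 y) = 1" using M_pos unfolding prot_scheme_def by auto
  then show ?thesis by (cases N) auto
qed

lemma term_fin:
  assumes "x < M" "0 \<le> a"
  shows "(ennreal (p x) * c x y * ennreal a < \<infinity>) \<longleftrightarrow> (p x = 0 \<or> a = 0 \<or> c x y < \<infinity>)"
  using assms p_nonneg
  by (auto simp: ennreal_mult_less_top top.not_eq_extremum)

lemma term_real:
  assumes "x < M" "0 \<le> a" "p x = 0 \<or> a = 0 \<or> c x y < \<infinity>"
  shows "ennreal (p x) * c x y * ennreal a = ennreal (p x * r x y * a)"
proof -
  have px: "0 \<le> p x" using p_nonneg assms by auto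
  show ?thesis
  proof (cases "p x = 0 \<or> a = 0")
    case True then show ?thesis by auto
  next
    case False
    then have "c x y < \<infinity>" using assms by auto
    then have "c x y = ennreal (r x y)" "0 \<le> r x y" unfolding r_def by (auto simp: less_top)
    then show ?thesis using px assms by (simp add: ennreal_mult)
  qed
qed

lemma rc_nonneg:
  assumes "\<forall>x<M. \<forall>y<N. 0 \<le> P x y" shows "0 \<le> rc P"
  unfolding rc_def using assms p_nonneg
  by (intro sum_nonneg) (auto simp: r_def)

lemma tc_eq:
  assumes "\<forall>x<M. \<forall>y<N. 0 \<le> P x y" "okP P"
  shows "total_cost M N p c P = ennreal (rc P)"
proof -
  have "total_cost M N p c P = (\<Sum>x<M. \<Sum>y<N. ennreal (p x * r x y * P x y))"
    unfolding total_cost_def using assms unfolding okP_def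
    by (intro sum.cong refl term_real) auto
  also have "\<dots> = ennreal (rc P)"
  proof -
    have nn: "\<And>x y. x < M \<Longrightarrow> y < N \<Longrightarrow> 0 \<le> p x * r x y * P x y"
      using assms p_nonneg by (auto simp: r_def)
    have "(\<Sum>x<M. \<Sum>y<N. ennreal (p x * r x y * P x y)) = (\<Sum>x<M. ennreal (\<Sum>y<N. p x * r x y * P x y))"
      using nn by (intro sum.cong refl sum_ennreal) auto
    also have "\<dots> = ennreal (rc P)" unfolding rc_def
      using nn by (intro sum_ennreal sum_nonneg) auto
    finally show ?thesis .
  qed
  finally show ?thesis .
qed

lemma prot_iff:
  "prot_scheme M N p c P \<longleftrightarrow> (\<forall>x<M. \<forall>y<N. 0 \<le> P x y) \<and> (\<forall>x<M. (\<Sum>y<N. P x y) = 1) \<and> okP P"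
proof
  assume a: "prot_scheme M N p c P"
  then have nn: "\<forall>x<M. \<forall>y<N. 0 \<le> P x y" unfolding prot_scheme_def by auto
  have "okP P" unfolding okP_def
  proof (intro allI impI)
    fix x y assume xy: "x < M" "y < N"
    have "total_cost M N p c P < \<infinity>" using a unfolding prot_scheme_def by auto
    then have "\<forall>x\<in>{..<M}. (\<Sum>y<N. ennreal (p x) * c x y * ennreal (P x y)) < \<infinity>"
      unfolding total_cost_def by (simp add: ennreal_sum_less_top)
    then have "ennreal (p x) * c x y * ennreal (P x y) < \<infinity>"
      using xy by (auto simp: ennreal_sum_less_top)
    then show "p x = 0 \<or> P x y = 0 \<or> c x y < \<infinity>" using term_fin xy nn by auto
  qed
  then show "(\<forall>x<M. \<forall>y<N. 0 \<le> P x y) \<and> (\<forall>x<M. (\<Sum>y<N. P x y) = 1) \<and> okP P"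
    using a unfolding prot_scheme_def by auto
next
  assume "(\<forall>x<M. \<forall>y<N. 0 \<le> P x y) \<and> (\<forall>x<M. (\<Sum>y<N. P x y) = 1) \<and> okP P"
  then show "prot_scheme M N p c P"
    unfolding prot_scheme_def using tc_eq by auto
qed

lemma cost_eq: "prot_scheme M N p c P \<Longrightarrow> cost M N p c P = rc P"
  unfolding cost_def using tc_eq prot_iff rc_nonneg by auto

lemma ach_iff: "prot_scheme M N p c P \<Longrightarrow>
   achieves M N p c P L C \<longleftrightarrow> exp_leak M N P \<le> L \<and> rc P \<le> C \<and> 0 \<le> C"
  unfolding achieves_def using tc_eq prot_iff
  by (auto simp: ennreal_le_iff)

definition detP :: "(nat \<Rightarrow> nat) \<Rightarrow> nat \<Rightarrow> nat \<Rightarrow> real" where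
  "detP f = (\<lambda>x y. if f x = y then 1 else 0)"
definition DF :: "(nat \<Rightarrow> nat) set" where
  "DF = {f \<in> {..<M} \<rightarrow>\<^sub>E {..<N}. \<forall>x<M. 0 < p x \<longrightarrow> c x (f x) < \<infinity>}"

lemma finite_DF: "finite DF"
  unfolding DF_def by (rule finite_subset[OF _ finite_PiE[of "{..<M}" "\<lambda>_. {..<N}"]]) auto

lemma det_in: assumes "f \<in> DF" shows "det_scheme M N p c (detP f)" "prot_scheme M N p c (detP f)"
proof -
  have f: "\<And>x. x < M \<Longrightarrow> f x < N" "\<And>x. x < M \<Longrightarrow> 0 < p x \<Longrightarrow> c x (f x) < \<infinity>"
    using assms unfolding DF_def by auto
  have rows: "\<forall>x<M. (\<Sum>y<N. detP f x y) = 1"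
  proof (intro allI impI)
    fix x assume "x < M"
    then have "f x \<in> {..<N}" using f by auto
    then show "(\<Sum>y<N. detP f x y) = 1" unfolding detP_def
      by (simp add: sum.delta)
  qed
  have ok: "okP (detP f)" unfolding okP_def detP_def
    using f p_nonneg by (auto simp: order_le_less)
  show "prot_scheme M N p c (detP f)" unfolding prot_iff using rows ok
    by (auto simp: detP_def)
  then show "det_scheme M N p c (detP f)" unfolding det_scheme_def
    by (auto simp: detP_def)
qed

lemma rc_det: assumes "\<And>x. x < M \<Longrightarrow> f x < N"
  shows "rc (detP f) = (\<Sum>x<M. p x * r x (f x))"
  unfolding rc_def detP_def
proof (intro sum.cong refl)
  fix x assume "x \<in> {..<M}"
  then have "f x \<in> {..<N}" using assms by auto
  then show "(\<Sum>y<N. p x * r x y * (if f x = y then 1 else 0)) = p x * r x (f x)"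
    by (simp add: if_distrib sum.delta cong: if_cong)
qed

lemma leak_det: assumes "\<And>x. x < M \<Longrightarrow> f x < N"
  shows "exp_leak M N (detP f) = card (f ` {..<M})"
proof -
  have "exp_leak M N (detP f) = (\<Sum>y<N. if y \<in> f ` {..<M} then 1 else 0)"
    unfolding exp_leak_def
  proof (intro sum.cong refl)
    fix y assume y: "y \<in> {..<N}"
    show "Max ((\<lambda>x. detP f x y) ` {..<M}) = (if y \<in> f ` {..<M} then 1 else 0)"
    proof (cases "y \<in> f ` {..<M}")
      case True
      then obtain x where x: "x < M" "f x = y" by auto
      have "Max ((\<lambda>x. detP f x y) ` {..<M}) = 1"
        by (rule Max_eqI) (use x in \<open>auto simp: detP_def\<close>)
      then show ?thesis using True by simp
    next
      case False
      then have "(\<lambda>x. detP f x y) ` {..<M} = {0}" using M_pos unfolding detP_def by auto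
      then show ?thesis using False by simp
    qed
  qed
  also have "\<dots> = card ({..<N} \<inter> f ` {..<M})"
    by (simp add: sum.If_cases)
  also have "{..<N} \<inter> f ` {..<M} = f ` {..<M}" using assms by auto
  finally show ?thesis .
qed

lemma Max_col_ge: "x < M \<Longrightarrow> A x y \<le> Max ((\<lambda>x. A x y) ` {..<M})"
  by (rule Max_ge) auto

lemma leak_ge1: assumes "prot_scheme M N p c P" shows "1 \<le> exp_leak M N P"
proof -
  have "1 = (\<Sum>y<N. P 0 y)" using assms M_pos unfolding prot_scheme_def by auto
  also have "\<dots> \<le> exp_leak M N P" unfolding exp_leak_def
    by (intro sum_mono Max_col_ge M_pos)
  finally show ?thesis .
qed

definition mix :: "real \<Rightarrow> (nat \<Rightarrow> nat \<Rightarrow> real) \<Rightarrow> (nat \<Rightarrow> nat \<Rightarrow> real) \<Rightarrow> nat \<Rightarrow> nat \<Rightarrow> real" where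
  "mix t P1 P2 = (\<lambda>x y. t * P1 x y + (1 - t) * P2 x y)"

lemma mix_props:
  assumes P1: "prot_scheme M N p c P1" and P2: "prot_scheme M N p c P2" and t: "0 \<le> t" "t \<le> 1"
  shows "prot_scheme M N p c (mix t P1 P2)"
    "rc (mix t P1 P2) = t * rc P1 + (1 - t) * rc P2"
    "exp_leak M N (mix t P1 P2) \<le> t * exp_leak M N P1 + (1 - t) * exp_leak M N P2"
proof -
  have n1: "\<forall>x<M. \<forall>y<N. 0 \<le> P1 x y" and n2: "\<forall>x<M. \<forall>y<N. 0 \<le> P2 x y"
    and r1: "\<forall>x<M. (\<Sum>y<N. P1 x y) = 1" and r2: "\<forall>x<M. (\<Sum>y<N. P2 x y) = 1"
    and o1: "okP P1" and o2: "okP P2" using P1 P2 unfolding prot_iff by auto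
  have nn: "\<forall>x<M. \<forall>y<N. 0 \<le> mix t P1 P2 x y" unfolding mix_def using n1 n2 t by auto
  have rows: "\<forall>x<M. (\<Sum>y<N. mix t P1 P2 x y) = 1" unfolding mix_def
    using r1 r2 by (simp add: sum.distrib sum_distrib_left[symmetric])
  have ok: "okP (mix t P1 P2)" using o1 o2 unfolding okP_def mix_def by fastforce
  show "prot_scheme M N p c (mix t P1 P2)" unfolding prot_iff using nn rows ok by auto
  show "rc (mix t P1 P2) = t * rc P1 + (1 - t) * rc P2"
  proof -
    have "rc (mix t P1 P2) = (\<Sum>x<M. \<Sum>y<N. t * (p x * r x y * P1 x y) + (1 - t) * (p x * r x y * P2 x y))"
      unfolding rc_def mix_def by (intro sum.cong refl) (simp add: algebra_simps)
    also have "\<dots> = t * rc P1 + (1 - t) * rc P2"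
      unfolding rc_def by (simp add: sum.distrib sum_distrib_left)
    finally show ?thesis .
  qed
  have "exp_leak M N (mix t P1 P2) \<le> (\<Sum>y<N. t * Max ((\<lambda>x. P1 x y) ` {..<M}) + (1 - t) * Max ((\<lambda>x. P2 x y) ` {..<M}))"
    unfolding exp_leak_def
  proof (intro sum_mono)
    fix y assume "y \<in> {..<N}"
    show "Max ((\<lambda>x. mix t P1 P2 x y) ` {..<M}) \<le> t * Max ((\<lambda>x. P1 x y) ` {..<M}) + (1 - t) * Max ((\<lambda>x. P2 x y) ` {..<M})"
    proof (rule Max.boundedI)
      show "finite ((\<lambda>x. mix t P1 P2 x y) ` {..<M})" by simp
      show "(\<lambda>x. mix t P1 P2 x y) ` {..<M} \<noteq> {}" using M_pos by auto
    next
      fix z assume "z \<in> (\<lambda>x. mix t P1 P2 x y) ` {..<M}"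
      then obtain x where x: "x < M" "z = mix t P1 P2 x y" by auto
      have "t * P1 x y \<le> t * Max ((\<lambda>x. P1 x y) ` {..<M})"
        using t x by (intro mult_left_mono Max_col_ge) auto
      moreover have "(1 - t) * P2 x y \<le> (1 - t) * Max ((\<lambda>x. P2 x y) ` {..<M})"
        using t x by (intro mult_left_mono Max_col_ge) auto
      ultimately show "z \<le> t * Max ((\<lambda>x. P1 x y) ` {..<M}) + (1 - t) * Max ((\<lambda>x. P2 x y) ` {..<M})"
        using x unfolding mix_def by simp
    qed
  qed
  also have "\<dots> = t * exp_leak M N P1 + (1 - t) * exp_leak M N P2"
    unfolding exp_leak_def by (simp add: sum.distrib sum_distrib_left)
  finally show "exp_leak M N (mix t P1 P2) \<le> t * exp_leak M N P1 + (1 - t) * exp_leak M N P2" .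
qed

end



lemma telesc: "k \<le> n \<Longrightarrow> (c::nat\<Rightarrow>real) k + (\<Sum>y\<in>{Suc k..<Suc n}. c y - c (y - 1)) = c n"
proof (induction n)
  case 0 then show ?case by simp
next
  case (Suc n)
  show ?case
  proof (cases "k = Suc n")
    case True then show ?thesis by simp
  next
    case False
    then have "k \<le> n" using Suc by auto
    then show ?thesis using Suc by (simp add: atLeastLessThanSuc)
  qed
qed

lemma abel:
  fixes c u :: "nat \<Rightarrow> real"
  assumes "k \<le> n"
  shows "(\<Sum>y\<in>{k..<n}. c y * u y) = c k * (\<Sum>y\<in>{k..<n}. u y)
           + (\<Sum>y\<in>{Suc k..<n}. (c y - c (y - 1)) * (\<Sum>z\<in>{y..<n}. u z))"
  using assms
proof (induction n)
  case 0 then show ?case by simp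
next
  case (Suc n)
  show ?case
  proof (cases "k = Suc n")
    case True then show ?thesis by simp
  next
    case False
    then have kn: "k \<le> n" using Suc by auto
    have A: "(\<Sum>y\<in>{Suc k..<Suc n}. (c y - c (y - 1)) * (\<Sum>z\<in>{y..<Suc n}. u z))
      = (\<Sum>y\<in>{Suc k..<Suc n}. (c y - c (y - 1)) * (\<Sum>z\<in>{y..<n}. u z))
        + (\<Sum>y\<in>{Suc k..<Suc n}. (c y - c (y - 1))) * u n"
    proof -
      have "(\<Sum>y\<in>{Suc k..<Suc n}. (c y - c (y - 1)) * (\<Sum>z\<in>{y..<Suc n}. u z))
          = (\<Sum>y\<in>{Suc k..<Suc n}. (c y - c (y - 1)) * (\<Sum>z\<in>{y..<n}. u z) + (c y - c (y - 1)) * u n)"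
      proof (intro sum.cong refl)
        fix y assume "y \<in> {Suc k..<Suc n}"
        then have "y \<le> n" by auto
        then have "(\<Sum>z\<in>{y..<Suc n}. u z) = (\<Sum>z\<in>{y..<n}. u z) + u n"
          by (simp add: atLeastLessThanSuc)
        then show "(c y - c (y - 1)) * (\<Sum>z\<in>{y..<Suc n}. u z) = (c y - c (y - 1)) * (\<Sum>z\<in>{y..<n}. u z) + (c y - c (y - 1)) * u n"
          by (simp add: algebra_simps)
      qed
      then show ?thesis by (simp only: sum.distrib sum_distrib_right)
    qed
    have B: "(\<Sum>y\<in>{Suc k..<Suc n}. (c y - c (y - 1)) * (\<Sum>z\<in>{y..<n}. u z))
        = (\<Sum>y\<in>{Suc k..<n}. (c y - c (y - 1)) * (\<Sum>z\<in>{y..<n}. u z))"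
      using kn by (simp add: atLeastLessThanSuc)
    have C: "(\<Sum>y\<in>{Suc k..<Suc n}. (c y - c (y - 1))) = c n - c k"
      using telesc[OF kn, of c] by simp
    have L: "(\<Sum>y\<in>{k..<Suc n}. c y * u y) = (\<Sum>y\<in>{k..<n}. c y * u y) + c n * u n" using kn by simp
    have U: "(\<Sum>y\<in>{k..<Suc n}. u y) = (\<Sum>y\<in>{k..<n}. u y) + u n" using kn by simp
    show ?thesis
      apply (simp only: L U A B C Suc.IH[OF kn])
      by (simp only: distrib_left left_diff_distrib)
  qed
qed


lemma ceil_sum:
  fixes s :: real and K :: nat
  assumes K: "0 < K"
  shows "(\<Sum>j<K. real_of_int \<lceil>s - real j / real K\<rceil>) = real K * real_of_int \<lfloor>s\<rfloor> + real_of_int \<lceil>real K * (s - real_of_int \<lfloor>s\<rfloor>)\<rceil>"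
proof -
  define n where "n = \<lfloor>s\<rfloor>"
  define f where "f = s - real_of_int n"
  have f01: "0 \<le> f" "f < 1" unfolding f_def n_def by linarith+
  have each: "real_of_int \<lceil>s - real j / real K\<rceil> = real_of_int n + (if real j < real K * f then 1 else 0)"
    if j: "j < K" for j
  proof -
    have jk: "real j / real K < 1" "0 \<le> real j / real K" using j K by auto
    have eq: "s - real j / real K = of_int n + (f - real j / real K)" unfolding f_def by simp
    have "\<lceil>f - real j / real K\<rceil> = (if real j < real K * f then 1 else 0)"
    proof (cases "real j < real K * f")
      case True
      then have "0 < f - real j / real K" using K by (simp add: field_simps)
      note pos = this
      have "\<lceil>f - real j / real K\<rceil> = 1" by (rule ceiling_unique) (use pos f01 jk in linarith)+
      then show ?thesis using True by simp
    next
      case False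
      then have "f - real j / real K \<le> 0" using K by (simp add: field_simps)
      note pos = this
      have "\<lceil>f - real j / real K\<rceil> = 0" by (rule ceiling_unique) (use pos f01 jk in linarith)+
      then show ?thesis using False by simp
    qed
    moreover have "\<lceil>of_int n + (f - real j / real K)\<rceil> = n + \<lceil>f - real j / real K\<rceil>"
      by (metis add.commute ceiling_add_of_int)
    ultimately show ?thesis unfolding eq by simp
  qed
  have "(\<Sum>j<K. real_of_int \<lceil>s - real j / real K\<rceil>) = (\<Sum>j<K. real_of_int n + (if real j < real K * f then 1 else 0))"
    using each by (intro sum.cong) auto
  also have "\<dots> = real K * real_of_int n + real (card ({..<K} \<inter> {j. real j < real K * f}))"
    by (simp add: sum.distrib sum.If_cases)
  also have "({..<K} \<inter> {j. real j < real K * f}) = {..<nat \<lceil>real K * f\<rceil>}"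
  proof -
    have "real K * f \<le> real K" using f01 mult_left_mono[of f 1 "real K"] by simp
    then have leK: "nat \<lceil>real K * f\<rceil> \<le> K"
      by (metis ceiling_mono ceiling_of_nat nat_int nat_mono)
    have iff: "\<And>j. real j < real K * f \<longleftrightarrow> j < nat \<lceil>real K * f\<rceil>"
      by (meson linorder_not_less nat_ceiling_le_eq)
    show ?thesis
    proof (rule set_eqI)
      fix j
      show "j \<in> {..<K} \<inter> {j. real j < real K * f} \<longleftrightarrow> j \<in> {..<nat \<lceil>real K * f\<rceil>}"
        unfolding Int_iff lessThan_iff mem_Collect_eq iff using leK by (meson less_le_trans)
    qed
  qed
  also have "real (card {..<nat \<lceil>real K * f\<rceil>}) = real_of_int \<lceil>real K * f\<rceil>"
    using f01 by simp
  finally show ?thesis unfolding n_def f_def .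
qed

lemma ceil_avg:
  fixes s :: real and K :: nat
  assumes K: "0 < K"
  shows "real K * s \<le> (\<Sum>j<K. real_of_int \<lceil>s - real j / real K\<rceil>)"
    "(\<Sum>j<K. real_of_int \<lceil>s - real j / real K\<rceil>) \<le> real K * s + 1"
proof -
  define f where "f = s - real_of_int \<lfloor>s\<rfloor>"
  have "real K * f \<le> real_of_int \<lceil>real K * f\<rceil>" "real_of_int \<lceil>real K * f\<rceil> < real K * f + 1"
    by linarith+
  moreover have "real K * s = real K * real_of_int \<lfloor>s\<rfloor> + real K * f" unfolding f_def by (simp add: algebra_simps)
  ultimately show "real K * s \<le> (\<Sum>j<K. real_of_int \<lceil>s - real j / real K\<rceil>)"
    "(\<Sum>j<K. real_of_int \<lceil>s - real j / real K\<rceil>) \<le> real K * s + 1"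
    unfolding ceil_sum[OF K] f_def by linarith+
qed

lemma exists_le_avg:
  fixes v :: "nat \<Rightarrow> real"
  assumes "0 < K" "(\<Sum>j<K. v j) \<le> real K * B"
  shows "\<exists>j<K. v j \<le> B"
proof (rule ccontr)
  assume "\<not> ?thesis"
  then have "\<forall>j\<in>{..<K}. B < v j" by auto
  then have "(\<Sum>j<K. B) < (\<Sum>j<K. v j)" using assms by (intro sum_strict_mono) auto
  then show False using assms by simp
qed




lemma sum_split_at:
  fixes g :: "nat \<Rightarrow> real"
  assumes "a \<le> b" shows "(\<Sum>z<b. g z) = (\<Sum>z<a. g z) + (\<Sum>z\<in>{a..<b}. g z)"
proof -
  have "{..<b} = {..<a} \<union> {a..<b}" using assms by auto
  moreover have "sum g ({..<a} \<union> {a..<b}) = sum g {..<a} + sum g {a..<b}" by (rule sum.union_disjoint) auto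
  ultimately show ?thesis by simp
qed

lemma sum_split_at2:
  fixes g :: "nat \<Rightarrow> real"
  assumes "a \<le> b" "b \<le> n" shows "(\<Sum>z\<in>{a..<n}. g z) = (\<Sum>z\<in>{a..<b}. g z) + (\<Sum>z\<in>{b..<n}. g z)"
proof -
  have "{a..<n} = {a..<b} \<union> {b..<n}" using assms by auto
  moreover have "sum g ({a..<b} \<union> {b..<n}) = sum g {a..<b} + sum g {b..<n}" by (rule sum.union_disjoint) auto
  ultimately show ?thesis by simp
qed

context setting begin
lemma stair2: assumes "i < j" "j < N" "x < M" "c x i < \<infinity>" shows "c x i \<le> c x j" "c x j < \<infinity>"
proof -
  have "\<forall>i j x. i < j \<and> j < N \<and> x < M \<and> c x i < \<infinity> \<longrightarrow> c x i \<le> c x j \<and> c x j < \<infinity>"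
    using stair unfolding staircase_nondecr_def by (rule conjunct2)
  then show "c x i \<le> c x j" "c x j < \<infinity>" using assms by auto
qed
end

locale rnd = setting +
  fixes P :: "nat \<Rightarrow> nat \<Rightarrow> real"
  assumes P: "prot_scheme M N p c P"
begin

lemma P_nn: "x < M \<Longrightarrow> y < N \<Longrightarrow> 0 \<le> P x y"
  using P unfolding prot_iff by auto
lemma P_row: "x < M \<Longrightarrow> (\<Sum>y<N. P x y) = 1"
  using P unfolding prot_iff by auto
lemma P_ok: "okP P"
  using P unfolding prot_iff by auto
lemma okPD: "x < M \<Longrightarrow> y < N \<Longrightarrow> p x = 0 \<or> P x y = 0 \<or> c x y < \<infinity>"
  using P_ok unfolding okP_def by blast

lemma P_le1: assumes "x < M" "y < N" shows "P x y \<le> 1"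
proof -
  have "P x y \<le> (\<Sum>y<N. P x y)" using assms P_nn by (intro member_le_sum) auto
  then show ?thesis using P_row assms by simp
qed

definition m :: "nat \<Rightarrow> real" where "m y = Max ((\<lambda>x. P x y) ` {..<M})"
definition S :: "nat \<Rightarrow> real" where "S y = (\<Sum>z<y. m z)"
definition k :: "nat \<Rightarrow> nat" where "k x = (if 0 < p x then (LEAST y. c x y < \<infinity>) else 0)"
definition h :: "real \<Rightarrow> real \<Rightarrow> real" where "h \<theta> s = real_of_int \<lceil>s - \<theta>\<rceil>"
definition T :: "nat \<Rightarrow> nat \<Rightarrow> real" where "T x y = (\<Sum>z\<in>{y..<N}. P x z)"

lemma m_ge: "x < M \<Longrightarrow> P x y \<le> m y"
  unfolding m_def by (rule Max_col_ge)
lemma m_nn: "y < N \<Longrightarrow> 0 \<le> m y"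
  using m_ge[of 0 y] P_nn[of 0 y] M_pos by auto
lemma m_le1: "y < N \<Longrightarrow> m y \<le> 1"
  unfolding m_def using M_pos P_le1 by (intro Max.boundedI) auto

lemma S_mono: assumes "a \<le> b" "b \<le> N" shows "S a \<le> S b"
proof -
  have "S b = S a + (\<Sum>z\<in>{a..<b}. m z)" unfolding S_def by (rule sum_split_at[OF assms(1)])
  moreover have "0 \<le> (\<Sum>z\<in>{a..<b}. m z)" using assms m_nn by (intro sum_nonneg) auto
  ultimately show ?thesis by simp
qed

lemma S_N: "S N = exp_leak M N P"
  unfolding S_def exp_leak_def m_def by simp

lemma S_0: "S 0 = 0" unfolding S_def by simp

lemma k_props:
  assumes x: "x < M" and px: "0 < p x"
  shows "k x < N" "c x (k x) < \<infinity>" "\<And>y. y < k x \<Longrightarrow> \<not> c x y < \<infinity>"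
proof -
  have "\<exists>y<N. P x y \<noteq> 0"
  proof (rule ccontr)
    assume "\<not> ?thesis"
    then have "(\<Sum>y<N. P x y) = 0" by auto
    then show False using P_row x by simp
  qed
  then obtain y where y: "y < N" "P x y \<noteq> 0" by auto
  then have cy: "c x y < \<infinity>" using okPD[OF x y(1)] px by auto
  have kx: "k x = (LEAST y. c x y < \<infinity>)" unfolding k_def using px by simp
  show "c x (k x) < \<infinity>" unfolding kx by (rule LeastI[of _ y]) (rule cy)
  have "k x \<le> y" unfolding kx by (rule Least_le) (rule cy)
  then show "k x < N" using y by simp
  show "\<And>y. y < k x \<Longrightarrow> \<not> c x y < \<infinity>" unfolding kx by (rule not_less_Least)
qed

lemma k_lt: assumes "x < M" shows "k x < N"
proof (cases "0 < p x")
  case True then show ?thesis using k_props(1)[OF assms] by blast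
next
  case False then have "k x = 0" unfolding k_def by simp
  then show ?thesis using N_pos by simp
qed

lemma P_below_k: assumes "x < M" "y < k x" "y < N" shows "P x y = 0"
proof (cases "0 < p x")
  case True
  then have "\<not> c x y < \<infinity>" using k_props(3)[OF assms(1) True assms(2)] by blast
  then show ?thesis using okPD[OF assms(1,3)] True by auto
next
  case False
  then show ?thesis using assms unfolding k_def by auto
qed

lemma c_fin: assumes "x < M" "0 < p x" "k x \<le> y" "y < N" shows "c x y < \<infinity>"
proof (cases "k x = y")
  case True then show ?thesis using k_props(2)[OF assms(1,2)] by simp
next
  case False
  then have "k x < y" using assms by auto
  then show ?thesis using stair2(2)[of "k x" y x] k_props(2)[OF assms(1,2)] assms by simp
qed

lemma r_mono: assumes "x < M" "0 < p x" "k x \<le> y" "y \<le> y'" "y' < N" shows "r x y \<le> r x y'"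
proof (cases "y = y'")
  case True then show ?thesis by simp
next
  case False
  then have "y < y'" using assms by auto
  moreover have "c x y < \<infinity>" using c_fin assms by auto
  ultimately have "c x y \<le> c x y'" "c x y' < \<infinity>" using stair2[of y y' x] assms by simp_all
  then show ?thesis unfolding r_def by (intro enn2real_mono) auto
qed

lemma row_from_k: assumes "x < M" shows "(\<Sum>y\<in>{k x..<N}. P x y) = 1"
proof -
  have "(\<Sum>y<N. P x y) = (\<Sum>y<k x. P x y) + (\<Sum>y\<in>{k x..<N}. P x y)"
    using k_lt[OF assms] by (intro sum_split_at) auto
  moreover have "(\<Sum>y<k x. P x y) = 0" using P_below_k assms k_lt[OF assms] by (intro sum.neutral) auto
  ultimately show ?thesis using P_row assms by simp
qed

lemma S_diff: assumes "a \<le> b" "b \<le> N" shows "S b - S a = (\<Sum>z\<in>{a..<b}. m z)"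
  unfolding S_def using sum_split_at[OF assms(1), of m] by simp

lemma S_gap: assumes "x < M" shows "S (k x) + 1 \<le> S N"
proof -
  have kN: "k x \<le> N" using k_lt assms by (simp add: less_imp_le)
  have "1 = (\<Sum>y\<in>{k x..<N}. P x y)" using row_from_k assms by simp
  also have "\<dots> \<le> (\<Sum>y\<in>{k x..<N}. m y)" using m_ge assms by (intro sum_mono) auto
  also have "\<dots> = S N - S (k x)" using S_diff[OF kN] by simp
  finally show ?thesis by linarith
qed

lemma T_nn: "x < M \<Longrightarrow> 0 \<le> T x y"
  unfolding T_def using P_nn by (intro sum_nonneg) auto

lemma T_ge: assumes "x < M" "k x \<le> y" "y \<le> N" shows "1 - (S y - S (k x)) \<le> T x y"
proof -
  have "1 = (\<Sum>z\<in>{k x..<y}. P x z) + T x y"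
    using row_from_k[OF assms(1)] sum_split_at2[OF assms(2,3), of "P x"] unfolding T_def by simp
  moreover have "(\<Sum>z\<in>{k x..<y}. P x z) \<le> (\<Sum>z\<in>{k x..<y}. m z)" using m_ge assms by (intro sum_mono) auto
  moreover have "(\<Sum>z\<in>{k x..<y}. m z) = S y - S (k x)" using S_diff assms by simp
  ultimately show ?thesis by linarith
qed

lemma h_mono: "s \<le> s' \<Longrightarrow> h \<theta> s \<le> h \<theta> s'"
  unfolding h_def by (simp add: ceiling_mono)
lemma h_plus: "h \<theta> (s + 1) = h \<theta> s + 1"
proof -
  have "\<lceil>s + 1 - \<theta>\<rceil> = \<lceil>s - \<theta>\<rceil> + 1" 
  proof -
    have "s + 1 - \<theta> = (s - \<theta>) + 1" by simp
    then show ?thesis by (simp only: ceiling_add_one)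
  qed
  then show ?thesis unfolding h_def by simp
qed
lemma h_zero: "0 \<le> \<theta> \<Longrightarrow> \<theta> < 1 \<Longrightarrow> h \<theta> 0 = 0"
proof -
  assume "0 \<le> \<theta>" "\<theta> < 1"
  then have "\<lceil>0 - \<theta>\<rceil> = 0" by (intro ceiling_unique) auto
  then show ?thesis unfolding h_def by simp
qed
lemma h_step: "h \<theta> a < h \<theta> b \<Longrightarrow> h \<theta> a + 1 \<le> h \<theta> b"
proof -
  assume "h \<theta> a < h \<theta> b"
  then have "\<lceil>a - \<theta>\<rceil> < \<lceil>b - \<theta>\<rceil>" unfolding h_def by simp
  then have "\<lceil>a - \<theta>\<rceil> + 1 \<le> \<lceil>b - \<theta>\<rceil>" by simp
  then show ?thesis unfolding h_def by (metis of_int_1 of_int_add of_int_le_iff)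
qed
lemma h_lt1: "b < a + 1 \<Longrightarrow> h \<theta> b \<le> h \<theta> a + 1"
  using h_mono[of b "a + 1" \<theta>] h_plus[of \<theta> a] by simp
lemma h_ge1: "a + 1 \<le> b \<Longrightarrow> h \<theta> a < h \<theta> b"
  using h_mono[of "a + 1" b \<theta>] h_plus[of \<theta> a] by simp


definition D :: "real \<Rightarrow> nat \<Rightarrow> nat" where
  "D \<theta> x = (LEAST y. k x \<le> y \<and> h \<theta> (S (k x)) < h \<theta> (S (Suc y)))"

lemma D_props:
  assumes x: "x < M"
  shows "k x \<le> D \<theta> x" "D \<theta> x < N" "h \<theta> (S (k x)) < h \<theta> (S (Suc (D \<theta> x)))"
    "\<And>y. k x \<le> y \<Longrightarrow> y < D \<theta> x \<Longrightarrow> \<not> h \<theta> (S (k x)) < h \<theta> (S (Suc y))"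
proof -
  have kN: "k x \<le> N - 1" using k_lt[OF x] by simp
  have "Suc (N - 1) = N" using N_pos by simp
  then have w: "k x \<le> N - 1 \<and> h \<theta> (S (k x)) < h \<theta> (S (Suc (N - 1)))"
    using kN h_ge1[OF S_gap[OF x]] by simp
  have L: "k x \<le> D \<theta> x \<and> h \<theta> (S (k x)) < h \<theta> (S (Suc (D \<theta> x)))"
    unfolding D_def by (rule LeastI[of _ "N - 1"]) (rule w)
  then show "k x \<le> D \<theta> x" "h \<theta> (S (k x)) < h \<theta> (S (Suc (D \<theta> x)))" by auto
  have "D \<theta> x \<le> N - 1" unfolding D_def by (rule Least_le) (rule w)
  then show "D \<theta> x < N" using N_pos by simp
  fix y assume "k x \<le> y" "y < D \<theta> x"
  then show "\<not> h \<theta> (S (k x)) < h \<theta> (S (Suc y))"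
    using not_less_Least[of y "\<lambda>y. k x \<le> y \<and> h \<theta> (S (k x)) < h \<theta> (S (Suc y))"]
    unfolding D_def by blast
qed

lemma D_tail:
  assumes x: "x < M" and y: "k x < y" "y < N"
  shows "y \<le> D \<theta> x \<longleftrightarrow> h \<theta> (S y) \<le> h \<theta> (S (k x))"
proof
  assume "y \<le> D \<theta> x"
  then have "\<not> h \<theta> (S (k x)) < h \<theta> (S (Suc (y - 1)))"
    using D_props(4)[OF x, of "y - 1" \<theta>] y by auto
  then show "h \<theta> (S y) \<le> h \<theta> (S (k x))" using y by simp
next
  assume a: "h \<theta> (S y) \<le> h \<theta> (S (k x))"
  show "y \<le> D \<theta> x"
  proof (rule ccontr)
    assume "\<not> y \<le> D \<theta> x"
    then have "Suc (D \<theta> x) \<le> y" by simp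
    then have "S (Suc (D \<theta> x)) \<le> S y" using y by (intro S_mono) auto
    then have "h \<theta> (S (Suc (D \<theta> x))) \<le> h \<theta> (S y)" by (rule h_mono)
    then show False using a D_props(3)[OF x, of \<theta>] by simp
  qed
qed

lemma D_open:
  assumes x: "x < M"
  shows "h \<theta> (S (D \<theta> x)) < h \<theta> (S (Suc (D \<theta> x)))"
proof (cases "D \<theta> x = k x")
  case True then show ?thesis using D_props(3)[OF x, of \<theta>] by simp
next
  case False
  then have "k x < D \<theta> x" using D_props(1)[OF x, of \<theta>] by simp
  then have "h \<theta> (S (D \<theta> x)) \<le> h \<theta> (S (k x))"
    using D_tail[OF x _ D_props(2)[OF x]] by blast
  then show ?thesis using D_props(3)[OF x, of \<theta>] by simp
qed

definition Dr :: "real \<Rightarrow> nat \<Rightarrow> nat" where "Dr \<theta> = restrict (D \<theta>) {..<M}"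

lemma Dr_DF: "Dr \<theta> \<in> DF"
  unfolding DF_def Dr_def
proof (intro CollectI conjI allI impI)
  show "restrict (D \<theta>) {..<M} \<in> {..<M} \<rightarrow>\<^sub>E {..<N}" using D_props(2) by auto
  fix x assume "x < M" "0 < p x"
  then show "c x (restrict (D \<theta>) {..<M} x) < \<infinity>"
    using c_fin D_props(1,2) by simp
qed

lemma leak_Dr:
  assumes th: "0 \<le> \<theta>" "\<theta> < 1"
  shows "exp_leak M N (detP (Dr \<theta>)) \<le> h \<theta> (S N)"
proof -
  have img: "Dr \<theta> ` {..<M} = D \<theta> ` {..<M}" unfolding Dr_def by auto
  have "exp_leak M N (detP (Dr \<theta>)) = card (D \<theta> ` {..<M})"
    using leak_det[of "Dr \<theta>"] D_props(2) img unfolding Dr_def by simp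
  also have "card (D \<theta> ` {..<M}) \<le> card {y\<in>{..<N}. h \<theta> (S y) < h \<theta> (S (Suc y))}"
    using D_props(2) D_open by (intro card_mono) auto
  also have "real (card {y\<in>{..<N}. h \<theta> (S y) < h \<theta> (S (Suc y))})
      = (\<Sum>y<N. if h \<theta> (S y) < h \<theta> (S (Suc y)) then 1 else 0)"
    by (simp add: sum.If_cases Int_def)
  also have "\<dots> \<le> (\<Sum>y<N. h \<theta> (S (Suc y)) - h \<theta> (S y))"
  proof (intro sum_mono)
    fix y assume y: "y \<in> {..<N}"
    have "h \<theta> (S y) \<le> h \<theta> (S (Suc y))" using y by (intro h_mono S_mono) auto
    then show "(if h \<theta> (S y) < h \<theta> (S (Suc y)) then 1 else 0) \<le> h \<theta> (S (Suc y)) - h \<theta> (S y)"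
      using h_step[of \<theta> "S y" "S (Suc y)"] by auto
  qed
  also have "\<dots> = h \<theta> (S N) - h \<theta> (S 0)" by (rule sum_lessThan_telescope)
  also have "\<dots> = h \<theta> (S N)" using h_zero[OF th] S_0 by simp
  finally show ?thesis by simp
qed

lemma rc_Dr: "rc (detP (Dr \<theta>)) = (\<Sum>x<M. p x * r x (D \<theta> x))"
  using rc_det[of "Dr \<theta>"] D_props(2) unfolding Dr_def by simp

end



context rnd begin

lemma rowD:
  assumes x: "x < M"
  shows "r x (D \<theta> x) = r x (k x) + (\<Sum>y\<in>{Suc (k x)..<N}. (r x y - r x (y - 1)) * (if y \<le> D \<theta> x then 1 else 0))"
proof -
  define u :: "nat \<Rightarrow> real" where "u z = (if z = D \<theta> x then 1 else 0)" for z
  have kN: "k x \<le> N" using k_lt[OF x] by simp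
  have Din: "D \<theta> x \<in> {k x..<N}" using D_props(1,2)[OF x] by auto
  have s1: "(\<Sum>y\<in>{k x..<N}. r x y * u y) = r x (D \<theta> x)"
  proof -
    have "(\<Sum>y\<in>{k x..<N}. r x y * u y) = (\<Sum>y\<in>{k x..<N}. if y = D \<theta> x then r x y else 0)"
      unfolding u_def by (intro sum.cong) auto
    also have "\<dots> = r x (D \<theta> x)" using Din by (simp add: sum.delta')
    finally show ?thesis .
  qed
  have s2: "(\<Sum>y\<in>{k x..<N}. u y) = 1" unfolding u_def using Din by (simp add: sum.delta')
  have s3: "(\<Sum>z\<in>{y..<N}. u z) = (if y \<le> D \<theta> x then 1 else 0)" for y
    unfolding u_def using Din by (simp add: sum.delta')
  show ?thesis using abel[OF kN, of "r x" u] s1 s2 s3 by simp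
qed

lemma rowP:
  assumes x: "x < M"
  shows "(\<Sum>y<N. r x y * P x y) = r x (k x) + (\<Sum>y\<in>{Suc (k x)..<N}. (r x y - r x (y - 1)) * T x y)"
proof -
  have kN: "k x \<le> N" using k_lt[OF x] by simp
  have "(\<Sum>y<N. r x y * P x y) = (\<Sum>y<k x. r x y * P x y) + (\<Sum>y\<in>{k x..<N}. r x y * P x y)"
    by (rule sum_split_at[OF kN])
  moreover have "(\<Sum>y<k x. r x y * P x y) = 0" using P_below_k x kN by (intro sum.neutral) auto
  ultimately show ?thesis using abel[OF kN, of "r x" "P x"] row_from_k[OF x] unfolding T_def by simp
qed

definition g :: "real \<Rightarrow> nat \<Rightarrow> nat \<Rightarrow> real" where
  "g \<theta> x y = (if 1 \<le> S y - S (k x) then 0 else 1 - h \<theta> (S y) + h \<theta> (S (k x)))"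

lemma ind_le_g:
  assumes x: "x < M" and y: "k x < y" "y < N"
  shows "(if y \<le> D \<theta> x then 1 else 0) \<le> g \<theta> x y"
proof -
  have t: "y \<le> D \<theta> x \<longleftrightarrow> h \<theta> (S y) \<le> h \<theta> (S (k x))" by (rule D_tail[OF x y])
  have m: "h \<theta> (S (k x)) \<le> h \<theta> (S y)" using y by (intro h_mono S_mono) auto
  show ?thesis
  proof (cases "1 \<le> S y - S (k x)")
    case True
    then have "h \<theta> (S (k x)) < h \<theta> (S y)" by (intro h_ge1) simp
    then show ?thesis using t True unfolding g_def by auto
  next
    case False
    then have "h \<theta> (S y) \<le> h \<theta> (S (k x)) + 1" by (intro h_lt1) simp
    then show ?thesis using t m False unfolding g_def by auto
  qed
qed

lemma g_avg:
  assumes K: "0 < K" and x: "x < M" and y: "k x < y" "y < N"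
  shows "(\<Sum>j<K. g (real j / real K) x y) \<le> real K * T x y + 1"
proof (cases "1 \<le> S y - S (k x)")
  case True
  then have "(\<Sum>j<K. g (real j / real K) x y) = 0" unfolding g_def by simp
  moreover have "0 \<le> real K * T x y" using T_nn[OF x] by simp
  ultimately show ?thesis by simp
next
  case False
  have hh: "h (real j / real K) s = real_of_int \<lceil>s - real j / real K\<rceil>" for j s unfolding h_def by simp
  have "(\<Sum>j<K. g (real j / real K) x y) = (\<Sum>j<K. 1 - h (real j / real K) (S y) + h (real j / real K) (S (k x)))"
    unfolding g_def using False by simp
  also have "\<dots> = real K - (\<Sum>j<K. h (real j / real K) (S y)) + (\<Sum>j<K. h (real j / real K) (S (k x)))"
    by (simp add: sum.distrib sum_subtractf)
  also have "\<dots> \<le> real K - real K * S y + (real K * S (k x) + 1)"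
    using ceil_avg[OF K, of "S y"] ceil_avg[OF K, of "S (k x)"] unfolding hh by linarith
  also have "\<dots> = real K * (1 - (S y - S (k x))) + 1" by (simp add: algebra_simps)
  also have "\<dots> \<le> real K * T x y + 1"
    using T_ge[OF x, of y] y by (intro add_right_mono mult_left_mono) auto
  finally show ?thesis .
qed

lemma Delta_nn:
  assumes "x < M" "0 < p x" "y \<in> {Suc (k x)..<N}" shows "0 \<le> r x y - r x (y - 1)"
  using r_mono[OF assms(1,2), of "y - 1" y] assms(3) by auto

definition E :: "real \<Rightarrow> real" where
  "E \<alpha> = (\<Sum>x<M. p x * (\<Sum>y\<in>{Suc (k x)..<N}. r x y - r x (y - 1))) + \<alpha>"

lemma E_nn: "0 \<le> \<alpha> \<Longrightarrow> 0 \<le> E \<alpha>"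
  unfolding E_def
proof -
  assume a: "0 \<le> \<alpha>"
  have "0 \<le> (\<Sum>x<M. p x * (\<Sum>y\<in>{Suc (k x)..<N}. r x y - r x (y - 1)))"
  proof (intro sum_nonneg)
    fix x assume x: "x \<in> {..<M}"
    show "0 \<le> p x * (\<Sum>y\<in>{Suc (k x)..<N}. r x y - r x (y - 1))"
    proof (cases "0 < p x")
      case True then show ?thesis using Delta_nn x by (intro mult_nonneg_nonneg sum_nonneg) auto
    next
      case False then have "p x = 0" using p_nonneg x by force
      then show ?thesis by simp
    qed
  qed
  then show "0 \<le> (\<Sum>x<M. p x * (\<Sum>y\<in>{Suc (k x)..<N}. r x y - r x (y - 1))) + \<alpha>" using a by simp
qed

lemma rc_rows: "rc P = (\<Sum>x<M. p x * (\<Sum>y<N. r x y * P x y))"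
  unfolding rc_def by (simp add: sum_distrib_left mult.assoc)


lemma round_avg:
  assumes a: "0 \<le> \<alpha>" and K: "0 < K"
  shows "\<exists>j<K. rc (detP (Dr (real j / real K))) + \<alpha> * exp_leak M N (detP (Dr (real j / real K)))
            \<le> rc P + \<alpha> * exp_leak M N P + E \<alpha> / real K"
proof -
  define \<Theta> where "\<Theta> j = real j / real K" for j :: nat
  define Dl where "Dl x y = r x y - r x (y - 1)" for x y
  define W where "W j x = r x (k x) + (\<Sum>y\<in>{Suc (k x)..<N}. Dl x y * g (\<Theta> j) x y)" for j x
  define Ob where "Ob j = rc (detP (Dr (\<Theta> j))) + \<alpha> * exp_leak M N (detP (Dr (\<Theta> j)))" for j
  have th: "0 \<le> \<Theta> j" "\<Theta> j < 1" if "j < K" for j unfolding \<Theta>_def using that K by auto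
  have Ob_le: "Ob j \<le> (\<Sum>x<M. p x * W j x) + \<alpha> * h (\<Theta> j) (S N)" if j: "j < K" for j
  proof -
    have "rc (detP (Dr (\<Theta> j))) = (\<Sum>x<M. p x * r x (D (\<Theta> j) x))" by (rule rc_Dr)
    also have "\<dots> \<le> (\<Sum>x<M. p x * W j x)"
    proof (intro sum_mono)
      fix x assume x: "x \<in> {..<M}"
      show "p x * r x (D (\<Theta> j) x) \<le> p x * W j x"
      proof (cases "0 < p x")
        case False then have "p x = 0" using p_nonneg x by force
        then show ?thesis by simp
      next
        case True
        have "r x (D (\<Theta> j) x) \<le> W j x"
          unfolding rowD[OF x[simplified], of "\<Theta> j"] W_def
        proof (intro add_left_mono sum_mono)
          fix y assume y: "y \<in> {Suc (k x)..<N}"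
          show "(r x y - r x (y - 1)) * (if y \<le> D (\<Theta> j) x then 1 else 0) \<le> Dl x y * g (\<Theta> j) x y"
            unfolding Dl_def using Delta_nn[OF _ True y] x y ind_le_g[of x y "\<Theta> j"]
            by (intro mult_left_mono) auto
        qed
        then show ?thesis using True by (intro mult_left_mono) auto
      qed
    qed
    finally have 1: "rc (detP (Dr (\<Theta> j))) \<le> (\<Sum>x<M. p x * W j x)" .
    have 2: "\<alpha> * exp_leak M N (detP (Dr (\<Theta> j))) \<le> \<alpha> * h (\<Theta> j) (S N)"
      using leak_Dr[OF th[OF j]] a by (intro mult_left_mono) auto
    show ?thesis unfolding Ob_def using 1 2 by simp
  qed
  have sumW: "p x * (\<Sum>j<K. W j x) \<le> p x * (real K * (\<Sum>y<N. r x y * P x y) + (\<Sum>y\<in>{Suc (k x)..<N}. Dl x y))"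
    if x: "x < M" for x
  proof (cases "0 < p x")
    case False then have "p x = 0" using p_nonneg x by force
    then show ?thesis by simp
  next
    case True
    have "(\<Sum>j<K. W j x) = real K * r x (k x) + (\<Sum>y\<in>{Suc (k x)..<N}. Dl x y * (\<Sum>j<K. g (\<Theta> j) x y))"
      unfolding W_def by (simp add: sum.distrib sum_distrib_left sum.swap[of _ "{..<K}"])
    also have "\<dots> \<le> real K * r x (k x) + (\<Sum>y\<in>{Suc (k x)..<N}. Dl x y * (real K * T x y + 1))"
    proof (intro add_left_mono sum_mono mult_left_mono)
      fix y assume y: "y \<in> {Suc (k x)..<N}"
      show "(\<Sum>j<K. g (\<Theta> j) x y) \<le> real K * T x y + 1"
        unfolding \<Theta>_def using g_avg[OF K x, of y] y by auto
      show "0 \<le> Dl x y" unfolding Dl_def using Delta_nn[OF x True y] .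
    qed
    also have "\<dots> = real K * (r x (k x) + (\<Sum>y\<in>{Suc (k x)..<N}. Dl x y * T x y)) + (\<Sum>y\<in>{Suc (k x)..<N}. Dl x y)"
      by (simp add: algebra_simps sum.distrib sum_distrib_left)
    also have "\<dots> = real K * (\<Sum>y<N. r x y * P x y) + (\<Sum>y\<in>{Suc (k x)..<N}. Dl x y)"
      unfolding rowP[OF x] Dl_def by simp
    finally show ?thesis using True by (intro mult_left_mono) auto
  qed
  have sumh: "(\<Sum>j<K. h (\<Theta> j) (S N)) \<le> real K * S N + 1"
    unfolding \<Theta>_def h_def using ceil_avg(2)[OF K, of "S N"] by simp
  have "(\<Sum>j<K. Ob j) \<le> (\<Sum>j<K. (\<Sum>x<M. p x * W j x) + \<alpha> * h (\<Theta> j) (S N))"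
    using Ob_le by (intro sum_mono) auto
  also have "\<dots> = (\<Sum>x<M. p x * (\<Sum>j<K. W j x)) + \<alpha> * (\<Sum>j<K. h (\<Theta> j) (S N))"
    by (simp add: sum.distrib sum_distrib_left sum.swap[of _ "{..<K}"])
  also have "\<dots> \<le> (\<Sum>x<M. p x * (real K * (\<Sum>y<N. r x y * P x y) + (\<Sum>y\<in>{Suc (k x)..<N}. Dl x y))) + \<alpha> * (real K * S N + 1)"
  proof (rule add_mono)
    show "(\<Sum>x<M. p x * (\<Sum>j<K. W j x)) \<le> (\<Sum>x<M. p x * (real K * (\<Sum>y<N. r x y * P x y) + (\<Sum>y\<in>{Suc (k x)..<N}. Dl x y)))"
      using sumW by (intro sum_mono) auto
    show "\<alpha> * (\<Sum>j<K. h (\<Theta> j) (S N)) \<le> \<alpha> * (real K * S N + 1)"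
      using sumh a by (rule mult_left_mono)
  qed
  also have "\<dots> = real K * (rc P + \<alpha> * exp_leak M N P) + E \<alpha>"
    unfolding rc_rows E_def Dl_def S_N[symmetric]
    by (simp add: algebra_simps sum.distrib sum_distrib_left)
  also have "\<dots> = real K * (rc P + \<alpha> * exp_leak M N P + E \<alpha> / real K)"
    using K by (simp add: algebra_simps)
  finally have "(\<Sum>j<K. Ob j) \<le> real K * (rc P + \<alpha> * exp_leak M N P + E \<alpha> / real K)" .
  from exists_le_avg[OF K this] show ?thesis unfolding Ob_def \<Theta>_def .
qed

end



context setting begin

lemma rnd_inst: "prot_scheme M N p c P \<Longrightarrow> rnd M N p c P"
  by (intro rnd.intro setting_axioms rnd_axioms.intro)

definition lk :: "(nat \<Rightarrow> nat) \<Rightarrow> real" where "lk f = exp_leak M N (detP f)"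
definition kc :: "(nat \<Rightarrow> nat) \<Rightarrow> real" where "kc f = rc (detP f)"

lemma round_eps:
  assumes P: "prot_scheme M N p c P" and a: "0 \<le> \<alpha>" and e: "0 < \<epsilon>"
  shows "\<exists>f\<in>DF. kc f + \<alpha> * lk f \<le> rc P + \<alpha> * exp_leak M N P + \<epsilon>"
proof -
  interpret R: rnd M N p c P by (rule rnd_inst[OF P])
  define K where "K = nat \<lceil>R.E \<alpha> / \<epsilon>\<rceil> + 1"
  have K: "0 < K" unfolding K_def by simp
  have "R.E \<alpha> / \<epsilon> \<le> real K" unfolding K_def by linarith
  then have "R.E \<alpha> \<le> \<epsilon> * real K" using e by (simp add: divide_le_eq mult.commute)
  then have EK: "R.E \<alpha> / real K \<le> \<epsilon>" using K by (simp add: divide_le_eq mult.commute)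
  obtain j where "j < K" and j: "rc (detP (R.Dr (real j / real K))) + \<alpha> * exp_leak M N (detP (R.Dr (real j / real K)))
            \<le> rc P + \<alpha> * exp_leak M N P + R.E \<alpha> / real K"
    using R.round_avg[OF a K] by blast
  show ?thesis
    using R.Dr_DF j EK unfolding kc_def lk_def by (intro bexI[of _ "R.Dr (real j / real K)"]) auto
qed

lemma round_min:
  assumes P: "prot_scheme M N p c P" and a: "0 \<le> \<alpha>"
  shows "\<exists>f\<in>DF. kc f + \<alpha> * lk f \<le> rc P + \<alpha> * exp_leak M N P"
proof -
  define V where "V = (\<lambda>f. kc f + \<alpha> * lk f) ` DF"
  have fin: "finite V" unfolding V_def using finite_DF by simp
  obtain f1 where "f1 \<in> DF" using round_eps[OF P a, of 1] by auto
  then have ne: "V \<noteq> {}" unfolding V_def by auto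
  have "Min V \<le> rc P + \<alpha> * exp_leak M N P"
  proof (rule field_le_epsilon)
    fix e :: real assume "0 < e"
    then obtain f where f: "f \<in> DF" "kc f + \<alpha> * lk f \<le> rc P + \<alpha> * exp_leak M N P + e"
      using round_eps[OF P a] by blast
    have "Min V \<le> kc f + \<alpha> * lk f" using fin f unfolding V_def by (intro Min_le) auto
    then show "Min V \<le> rc P + \<alpha> * exp_leak M N P + e" using f by linarith
  qed
  moreover have "Min V \<in> V" using fin ne by (rule Min_in)
  ultimately show ?thesis unfolding V_def by auto
qed

lemma DF_ne: "DF \<noteq> {}"
  using ex round_min[of _ 0] by fastforce

lemma exists_min:
  fixes F :: "(nat \<Rightarrow> nat) \<Rightarrow> real"
  shows "\<exists>f0\<in>DF. \<forall>f\<in>DF. F f0 \<le> F f"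
proof -
  have fin: "finite (F ` DF)" using finite_DF by simp
  have ne: "F ` DF \<noteq> {}" using DF_ne by simp
  obtain f0 where "f0 \<in> DF" "F f0 = Min (F ` DF)" using Min_in[OF fin ne] by auto
  then show ?thesis using fin by (intro bexI[of _ f0]) auto
qed

lemma lower_bound:
  assumes f: "f \<in> DF" and a: "0 \<le> \<alpha>" and opt: "\<forall>g\<in>DF. kc f + \<alpha> * lk f \<le> kc g + \<alpha> * lk g"
    and P: "prot_scheme M N p c P"
  shows "kc f + \<alpha> * lk f \<le> rc P + \<alpha> * exp_leak M N P"
  using round_min[OF P a] opt by force

lemma const_DF: "\<exists>f\<in>DF. lk f \<le> 1"
proof -
  obtain P where P: "prot_scheme M N p c P" using ex by auto
  interpret R: rnd M N p c P by (rule rnd_inst[OF P])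
  define f where "f = restrict (\<lambda>_. N - 1) {..<M}"
  have fin: "f \<in> DF" unfolding DF_def f_def
  proof (intro CollectI conjI allI impI)
    show "restrict (\<lambda>_. N - 1) {..<M} \<in> {..<M} \<rightarrow>\<^sub>E {..<N}" using N_pos by auto
    fix x assume "x < M" "0 < p x"
    then show "c x (restrict (\<lambda>_. N - 1) {..<M} x) < \<infinity>"
      using R.c_fin[of x "N - 1"] R.k_lt[of x] N_pos by simp
  qed
  have "f ` {..<M} = {N - 1}" unfolding f_def using M_pos by auto
  then have "lk f = 1" unfolding lk_def using leak_det[of f] fin unfolding DF_def by auto
  then show ?thesis using fin by (intro bexI[of _ f]) simp_all
qed


lemma core:
  assumes L: "1 \<le> L"
  shows "\<exists>t a b \<alpha>. 0 \<le> t \<and> t \<le> 1 \<and> a \<in> DF \<and> b \<in> DF \<and> 0 \<le> \<alpha> \<and>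
     (\<forall>g\<in>DF. kc a + \<alpha> * lk a \<le> kc g + \<alpha> * lk g) \<and> kc a + \<alpha> * lk a = kc b + \<alpha> * lk b \<and>
     t * lk a + (1 - t) * lk b \<le> L \<and> (\<alpha> = 0 \<or> t * lk a + (1 - t) * lk b = L)"
proof -
  obtain g0 where g0: "g0 \<in> DF" "\<forall>f\<in>DF. kc g0 \<le> kc f" using exists_min[of kc] by auto
  show ?thesis
  proof (cases "lk g0 \<le> L")
    case True
    show ?thesis
      by (rule exI[of _ 1], rule exI[of _ g0], rule exI[of _ g0], rule exI[of _ 0]) (use g0 True in auto)
  next
    case False
    define A where "A = {f\<in>DF. lk f \<le> L}"
    define B where "B = {f\<in>DF. L < lk f}"
    have finA: "finite A" and finB: "finite B" unfolding A_def B_def using finite_DF by auto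
    have neA: "A \<noteq> {}" using const_DF L unfolding A_def by force
    have g0B: "g0 \<in> B" using False g0 unfolding B_def by auto
    define q where "q a b = (kc a - kc b) / (lk b - lk a)" for a b
    define \<beta> where "\<beta> b = Min ((\<lambda>a. q a b) ` A)" for b
    define \<alpha> where "\<alpha> = Max (\<beta> ` B)"
    have \<beta>_attain: "\<exists>a\<in>A. \<beta> b = q a b" for b
    proof -
      have "Min ((\<lambda>a. q a b) ` A) \<in> (\<lambda>a. q a b) ` A" using finA neA by (intro Min_in) auto
      then show ?thesis unfolding \<beta>_def by auto
    qed
    have \<beta>_le: "a \<in> A \<Longrightarrow> \<beta> b \<le> q a b" for a b unfolding \<beta>_def using finA by (intro Min_le) auto
    obtain bs where bs: "bs \<in> B" "\<alpha> = \<beta> bs"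
    proof -
      have "Max (\<beta> ` B) \<in> \<beta> ` B" using finB g0B by (intro Max_in) auto
      then show ?thesis using that unfolding \<alpha>_def by auto
    qed
    have \<alpha>_ge: "b \<in> B \<Longrightarrow> \<beta> b \<le> \<alpha>" for b unfolding \<alpha>_def using finB by (intro Max_ge) auto
    obtain as where as: "as \<in> A" "\<alpha> = q as bs" using \<beta>_attain[of bs] bs by auto
    have lA: "\<And>a. a \<in> A \<Longrightarrow> lk a \<le> L" and lB: "\<And>b. b \<in> B \<Longrightarrow> L < lk b"
      unfolding A_def B_def by auto
    have inDF: "\<And>a. a \<in> A \<Longrightarrow> a \<in> DF" "\<And>b. b \<in> B \<Longrightarrow> b \<in> DF" unfolding A_def B_def by auto
    have dpos: "0 < lk b - lk a" if "a \<in> A" "b \<in> B" for a b using lA[OF that(1)] lB[OF that(2)] by simp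
    have \<alpha>_nn: "0 \<le> \<alpha>"
    proof -
      obtain a where a: "a \<in> A" "\<beta> g0 = q a g0" using \<beta>_attain by blast
      have "0 \<le> kc a - kc g0" using g0 inDF a by auto
      then have "0 \<le> q a g0" unfolding q_def using dpos[OF a(1) g0B] by simp
      then show ?thesis using \<alpha>_ge[OF g0B] a by simp
    qed
    define v where "v = kc bs + \<alpha> * lk bs"
    have eq_as: "kc as + \<alpha> * lk as = v"
    proof -
      have "\<alpha> * (lk bs - lk as) = kc as - kc bs" using as dpos[OF as(1) bs(1)] unfolding q_def by simp
      then show ?thesis unfolding v_def by (simp add: algebra_simps)
    qed
    have optA: "v \<le> kc a + \<alpha> * lk a" if a: "a \<in> A" for a
    proof -
      have "\<alpha> \<le> q a bs" using \<beta>_le[OF a, of bs] bs by simp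
      then have "\<alpha> * (lk bs - lk a) \<le> kc a - kc bs" unfolding q_def using dpos[OF a bs(1)] by (simp add: le_divide_eq)
      then show ?thesis unfolding v_def by (simp add: algebra_simps)
    qed
    have optB: "v \<le> kc b + \<alpha> * lk b" if b: "b \<in> B" for b
    proof -
      obtain a where a: "a \<in> A" "\<beta> b = q a b" using \<beta>_attain by blast
      have "q a b \<le> \<alpha>" using \<alpha>_ge[OF b] a by simp
      then have "kc a - kc b \<le> \<alpha> * (lk b - lk a)" unfolding q_def using dpos[OF a(1) b] by (simp add: divide_le_eq)
      then have "kc a + \<alpha> * lk a \<le> kc b + \<alpha> * lk b" by (simp add: algebra_simps)
      then show ?thesis using optA[OF a(1)] by simp
    qed
    have opt: "\<forall>g\<in>DF. kc as + \<alpha> * lk as \<le> kc g + \<alpha> * lk g"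
    proof
      fix g assume "g \<in> DF"
      then have "g \<in> A \<or> g \<in> B" unfolding A_def B_def by auto
      then show "kc as + \<alpha> * lk as \<le> kc g + \<alpha> * lk g" using optA optB eq_as by auto
    qed
    define t where "t = (lk bs - L) / (lk bs - lk as)"
    have d: "0 < lk bs - lk as" by (rule dpos[OF as(1) bs(1)])
    have t01: "0 \<le> t" "t \<le> 1" unfolding t_def using d lA[OF as(1)] lB[OF bs(1)] by (auto simp: divide_le_eq)
    have tL: "t * lk as + (1 - t) * lk bs = L"
    proof -
      have "t * lk as + (1 - t) * lk bs = lk bs - t * (lk bs - lk as)" by (simp add: algebra_simps)
      also have "t * (lk bs - lk as) = lk bs - L" unfolding t_def using d by simp
      finally show ?thesis by simp
    qed
    show ?thesis
      apply (rule exI[of _ t], rule exI[of _ as], rule exI[of _ bs], rule exI[of _ \<alpha>])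
      using t01 inDF as(1) bs(1) \<alpha>_nn opt eq_as tL unfolding v_def by auto
  qed
qed


lemma Cd_lb:
  assumes f: "f \<in> DF" and a: "0 \<le> \<alpha>" and opt: "\<forall>g\<in>DF. kc f + \<alpha> * lk f \<le> kc g + \<alpha> * lk g"
  shows "kc f \<le> Cstar_d M N p c (lk f)"
  unfolding Cstar_d_def
proof (rule cInf_greatest)
  have "det_scheme M N p c (detP f)" "prot_scheme M N p c (detP f)" using det_in[OF f] by auto
  moreover have "achieves M N p c (detP f) (lk f) (kc f)"
    using ach_iff[OF det_in(2)[OF f]] rc_nonneg[of "detP f"] det_in(2)[OF f]
    unfolding lk_def kc_def prot_iff by auto
  ultimately show "{C. (lk f, C) \<in> Sd_set M N p c} \<noteq> {}" unfolding Sd_set_def by auto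
next
  fix C assume "C \<in> {C. (lk f, C) \<in> Sd_set M N p c}"
  then obtain Q where Q: "det_scheme M N p c Q" "achieves M N p c Q (lk f) C" unfolding Sd_set_def by auto
  then have Qp: "prot_scheme M N p c Q" unfolding det_scheme_def by auto
  have QL: "exp_leak M N Q \<le> lk f" "rc Q \<le> C" using Q(2) ach_iff[OF Qp] by auto
  have "kc f + \<alpha> * lk f \<le> rc Q + \<alpha> * exp_leak M N Q" by (rule lower_bound[OF f a opt Qp])
  moreover have "\<alpha> * exp_leak M N Q \<le> \<alpha> * lk f" using QL a by (intro mult_left_mono) auto
  ultimately show "kc f \<le> C" using QL by linarith
qed

end

theorem theorem1:
  fixes M N :: nat and p :: "nat \<Rightarrow> real" and c :: "nat \<Rightarrow> nat \<Rightarrow> ennreal"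
  assumes p_nonneg: "\<forall>x<M. 0 \<le> p x"
    and p_sum: "(\<Sum>x<M. p x) = 1"
    and stair: "staircase_nondecr M N c"
    and exists: "\<exists>P. prot_scheme M N p c P"
  shows "(\<forall>\<alpha>::real. \<alpha> > 0 \<longrightarrow>
           (\<exists>m. (\<exists>(L, C)\<in>S_set M N p c. C + \<alpha> * L = m) \<and>
                (\<forall>(L, C)\<in>S_set M N p c. m \<le> C + \<alpha> * L) \<and>
                (\<exists>(L, C)\<in>Sd_set M N p c. C + \<alpha> * L = m) \<and>
                (\<forall>(L, C)\<in>Sd_set M N p c. m \<le> C + \<alpha> * L)))
       \<and> (\<forall>L::real. L \<ge> 1 \<longrightarrow>
           (\<exists>t::real. \<exists>P1 P2. 0 \<le> t \<and> t \<le> 1 \<and>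
               det_scheme M N p c P1 \<and> det_scheme M N p c P2 \<and>
               (let P = (\<lambda>x y. t * P1 x y + (1 - t) * P2 x y) in
                  prot_scheme M N p c P \<and>
                  achieves M N p c P L (Cstar M N p c L) \<and>
                  exp_leak M N P \<le> L \<and>
                  Cstar M N p c L \<le> t * Cstar_d M N p c (exp_leak M N P1)
                                    + (1 - t) * Cstar_d M N p c (exp_leak M N P2))))"
proof -
  interpret st: setting M N p c
    by (rule setting.intro) (fact p_nonneg p_sum stair exists)+
  have part1: "\<exists>m. (\<exists>(L, C)\<in>S_set M N p c. C + \<alpha> * L = m) \<and>
                (\<forall>(L, C)\<in>S_set M N p c. m \<le> C + \<alpha> * L) \<and>
                (\<exists>(L, C)\<in>Sd_set M N p c. C + \<alpha> * L = m) \<and>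
                (\<forall>(L, C)\<in>Sd_set M N p c. m \<le> C + \<alpha> * L)" if a: "\<alpha> > 0" for \<alpha>
  proof -
    obtain f0 where f0: "f0 \<in> st.DF" "\<forall>f\<in>st.DF. st.kc f0 + \<alpha> * st.lk f0 \<le> st.kc f + \<alpha> * st.lk f"
      using st.exists_min[of "\<lambda>f. st.kc f + \<alpha> * st.lk f"] by auto
    have ach: "achieves M N p c (st.detP f0) (st.lk f0) (st.kc f0)"
      using st.ach_iff[OF st.det_in(2)[OF f0(1)]] st.rc_nonneg[of "st.detP f0"] st.det_in(2)[OF f0(1)]
      unfolding st.lk_def st.kc_def st.prot_iff by auto
    have inS: "(st.lk f0, st.kc f0) \<in> S_set M N p c"
      unfolding S_set_def using ach st.det_in(2)[OF f0(1)] by auto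
    have inSd: "(st.lk f0, st.kc f0) \<in> Sd_set M N p c"
      unfolding Sd_set_def using ach st.det_in(1)[OF f0(1)] by auto
    have lbS: "st.kc f0 + \<alpha> * st.lk f0 \<le> C + \<alpha> * L" if LC: "(L, C) \<in> S_set M N p c" for L C
    proof -
      obtain Q where Q: "prot_scheme M N p c Q" "achieves M N p c Q L C" using LC unfolding S_set_def by auto
      have QL: "exp_leak M N Q \<le> L" "st.rc Q \<le> C" using Q(2) st.ach_iff[OF Q(1)] by auto
      have "st.kc f0 + \<alpha> * st.lk f0 \<le> st.rc Q + \<alpha> * exp_leak M N Q"
        using st.lower_bound[OF f0(1) _ f0(2) Q(1)] a by simp
      moreover have "\<alpha> * exp_leak M N Q \<le> \<alpha> * L" using QL a by (intro mult_left_mono) auto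
      ultimately show ?thesis using QL by linarith
    qed
    have SdS: "Sd_set M N p c \<subseteq> S_set M N p c"
      unfolding Sd_set_def S_set_def det_scheme_def by auto
    show ?thesis
      apply (rule exI[of _ "st.kc f0 + \<alpha> * st.lk f0"])
      using inS inSd lbS SdS by blast
  qed
  have part2: "\<exists>t::real. \<exists>P1 P2. 0 \<le> t \<and> t \<le> 1 \<and>
               det_scheme M N p c P1 \<and> det_scheme M N p c P2 \<and>
               (let P = (\<lambda>x y. t * P1 x y + (1 - t) * P2 x y) in
                  prot_scheme M N p c P \<and>
                  achieves M N p c P L (Cstar M N p c L) \<and>
                  exp_leak M N P \<le> L \<and>
                  Cstar M N p c L \<le> t * Cstar_d M N p c (exp_leak M N P1)
                                    + (1 - t) * Cstar_d M N p c (exp_leak M N P2))" if L: "1 \<le> L" for L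
  proof -
    obtain t a b \<alpha> where t: "0 \<le> t" "t \<le> 1" and ab: "a \<in> st.DF" "b \<in> st.DF" and al: "0 \<le> \<alpha>"
      and opt: "\<forall>g\<in>st.DF. st.kc a + \<alpha> * st.lk a \<le> st.kc g + \<alpha> * st.lk g"
      and eqab: "st.kc a + \<alpha> * st.lk a = st.kc b + \<alpha> * st.lk b"
      and tle: "t * st.lk a + (1 - t) * st.lk b \<le> L"
      and teq: "\<alpha> = 0 \<or> t * st.lk a + (1 - t) * st.lk b = L"
      using st.core[OF L] by blast
    have optb: "\<forall>g\<in>st.DF. st.kc b + \<alpha> * st.lk b \<le> st.kc g + \<alpha> * st.lk g" using opt eqab by simp
    define P where "P = st.mix t (st.detP a) (st.detP b)"
    have Pe: "(\<lambda>x y. t * st.detP a x y + (1 - t) * st.detP b x y) = P" unfolding P_def st.mix_def by simp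
    have Pp: "prot_scheme M N p c P" and rcP: "st.rc P = t * st.kc a + (1 - t) * st.kc b"
      and lkP: "exp_leak M N P \<le> t * st.lk a + (1 - t) * st.lk b"
      using st.mix_props[OF st.det_in(2)[OF ab(1)] st.det_in(2)[OF ab(2)] t] unfolding P_def st.kc_def st.lk_def
      by auto
    have PL: "exp_leak M N P \<le> L" using lkP tle by linarith
    have rcP0: "0 \<le> st.rc P" using Pp st.rc_nonneg unfolding st.prot_iff by auto
    have lowQ: "st.rc P \<le> st.rc Q" if Q: "prot_scheme M N p c Q" "exp_leak M N Q \<le> L" for Q
    proof -
      define v where "v = st.kc a + \<alpha> * st.lk a"
      have v: "v \<le> st.rc Q + \<alpha> * exp_leak M N Q" unfolding v_def by (rule st.lower_bound[OF ab(1) al opt Q(1)])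
      have rP: "st.rc P = v - \<alpha> * (t * st.lk a + (1 - t) * st.lk b)"
      proof -
        have kb: "st.kc b = st.kc a + \<alpha> * st.lk a - \<alpha> * st.lk b" using eqab by simp
        show ?thesis unfolding rcP kb v_def by (simp add: algebra_simps)
      qed
      show ?thesis
      proof (cases "\<alpha> = 0")
        case True then show ?thesis using v rP by simp
      next
        case False
        then have "st.rc P = v - \<alpha> * L" using rP teq by simp
        moreover have "\<alpha> * exp_leak M N Q \<le> \<alpha> * L" using Q al by (intro mult_left_mono) auto
        ultimately show ?thesis using v by linarith
      qed
    qed
    have achP: "achieves M N p c P L (st.rc P)" using st.ach_iff[OF Pp] PL rcP0 by simp
    have Cs: "Cstar M N p c L = st.rc P"
      unfolding Cstar_def
    proof (rule antisym)
      show "Inf {C. (L, C) \<in> S_set M N p c} \<le> st.rc P"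
      proof (rule cInf_lower)
        show "st.rc P \<in> {C. (L, C) \<in> S_set M N p c}" unfolding S_set_def using Pp achP by auto
        show "bdd_below {C. (L, C) \<in> S_set M N p c}"
        proof (rule bdd_belowI)
          fix C assume "C \<in> {C. (L, C) \<in> S_set M N p c}"
          then show "0 \<le> C" unfolding S_set_def achieves_def by auto
        qed
      qed
      show "st.rc P \<le> Inf {C. (L, C) \<in> S_set M N p c}"
      proof (rule cInf_greatest)
        show "{C. (L, C) \<in> S_set M N p c} \<noteq> {}" unfolding S_set_def using Pp achP by auto
        fix C assume "C \<in> {C. (L, C) \<in> S_set M N p c}"
        then obtain Q where Q: "prot_scheme M N p c Q" "achieves M N p c Q L C" unfolding S_set_def by auto
        have QL: "exp_leak M N Q \<le> L" "st.rc Q \<le> C" using Q(2) st.ach_iff[OF Q(1)] by auto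
        show "st.rc P \<le> C" using lowQ[OF Q(1) QL(1)] QL(2) by linarith
      qed
    qed
    have Cda: "st.kc a \<le> Cstar_d M N p c (exp_leak M N (st.detP a))"
      using st.Cd_lb[OF ab(1) al opt] unfolding st.lk_def .
    have Cdb: "st.kc b \<le> Cstar_d M N p c (exp_leak M N (st.detP b))"
      using st.Cd_lb[OF ab(2) al optb] unfolding st.lk_def .
    have fin: "Cstar M N p c L \<le> t * Cstar_d M N p c (exp_leak M N (st.detP a))
                                    + (1 - t) * Cstar_d M N p c (exp_leak M N (st.detP b))"
      unfolding Cs rcP using Cda Cdb t by (intro add_mono mult_left_mono) auto
    show ?thesis
      apply (rule exI[of _ t], rule exI[of _ "st.detP a"], rule exI[of _ "st.detP b"])
      unfolding Let_def Pe
      using t st.det_in(1)[OF ab(1)] st.det_in(1)[OF ab(2)] Pp Cs achP PL fin by simp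
  qed
  show ?thesis using part1 part2 by blast
qed



end
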